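(* Let $q=p^e$ with $p$ prime, and let $\mathcal P$ be a projective plane of order $q$ which is $((\infty),[\infty])$-transitive with $\Gamma((\infty),[\infty])$ elementary abelian. Suppose $T\in\mathbb F_q[X,Y,Z]$ is a PTR polynomial obtained from coordinatising $\mathcal P$ optimally, so that the resulting additive loop is field addition, and let $M_2(X,Y)$ be the reduced polynomial with $M_2(x,y)=T(x,y,0)$. Then for every $a\in\mathbb F_q\setminus\{0,1\}$ the polynomial $f_a(X)=M_2(X,a)-X$ is a complete mapping on $\mathbb F_q$.
   Context: A polynomial $f\in\mathbb F_q[X]$ is a complete mapping on $\mathbb F_q$ if both $f(X)$ and $f(X)+X$ are permutation polynomials of $\mathbb F_q$. Coordinatisation: for a projective plane of order $q$, choose a quadrangle $O,X,Y,I$, label $O=(0,0)$, $X=(0)$, $Y=(\infty)$, $I=(1,1)$, $[\infty]=\overline{XY}$, $[0]=\overline{OY}$, $[0,0]=\overline{OX}$; $(0,1)=\overline{XI}\cap[0]$, $(1,0)=\overline{YI}\cap[0,0]$, $(1)=\overline{(1,0)(0,1)}\cap[\infty]$; other points of $[0]$ are labelled $(0,a)$ arbitrarily, then $(a,0)=\overline{(0,a)(1)}\cap[0,0]$, $(a)=\overline{(0,a)(1,0)}\cap[\infty]$, $(a,b)=\overline{(a,0)Y}\cap\overline{(0,b)X}$, $[m,k]=\overline{(m)(0,k)}$. The PTR polynomial is the reduced $T$ with $T(m,x,y)=k$ iff $(x,y)\in[m,k]$; $x\oplus y=T(1,x,y)$, $x\odot y=T(x,y,0)$; $T$ is linear if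 $T(x,y,z)=(x\odot y)\oplus z$; a PTR polynomial satisfies $T(x,1,0)=x$ and, for $a\ne c$, $T(x,a,b)=T(x,c,d)$ has a unique solution $x$. $(P,L)$-transitivity: $\Gamma(P,L)$ (central collineations with centre $P$ and axis $L$) is transitive on the points $\ne P$, not on $L$, of each line through $P$. Optimal coordinatisation (the paper's convention): when $\mathcal P$ is $((\infty),[\infty])$-transitive, the coordinatisation is chosen with $Y$ and $\overline{XY}$ the centre and axis, so that the PTR is linear with $\oplus$ associative and isomorphic to $\Gamma((\infty),[\infty])$, and when this group is elementary abelian the labelling is chosen so that $\oplus$ is addition in $\mathbb F_q$. *)

theory Defs
  imports "HOL-Computational_Algebra.Primes"
begin

text \<open>Planar ternary ring (PTR) function in the paper's coordinatisation convention:
  T m x y = k  iff the affine point (x,y) lies on the line [m,k].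
  Every function on a finite field is given by a unique reduced polynomial,
  so PTR polynomials are represented by their polynomial functions.
  The axioms below are exactly the incidence conditions of the projective plane
  expressed in the coordinates (normalisation by the quadrangle O,X,Y,I and
  the labelling rules, plus the affine-plane incidence axioms).\<close>

definition is_PTR :: "('a::{zero,one} \<Rightarrow> 'a \<Rightarrow> 'a \<Rightarrow> 'a) \<Rightarrow> bool" where
  "is_PTR T \<longleftrightarrow>
     (\<forall>m y. T m 0 y = y) \<and>
     (\<forall>x y. T 0 x y = y) \<and>
     (\<forall>m. T m 1 0 = m) \<and>
     (\<forall>x. T 1 x 0 = x) \<and>
     (\<forall>m x k. \<exists>!y. T m x y = k) \<and>
     (\<forall>a b c d. a \<noteq> c \<longrightarrow> (\<exists>!m. T m a b = T m c d)) \<and>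
     (\<forall>m k m' k'. m \<noteq> m' \<longrightarrow> (\<exists>!p. T m (fst p) (snd p) = k \<and> T m' (fst p) (snd p) = k'))"

definition linear_field_add_PTR :: "('a::field \<Rightarrow> 'a \<Rightarrow> 'a \<Rightarrow> 'a) \<Rightarrow> bool" where
  "linear_field_add_PTR T \<longleftrightarrow>
     is_PTR T \<and> (\<forall>x y. T 1 x y = x + y) \<and> (\<forall>x y z. T x y z = T 1 (T x y 0) z)"

definition complete_mapping :: "('a::field \<Rightarrow> 'a) \<Rightarrow> bool" where
  "complete_mapping f \<longleftrightarrow> bij f \<and> bij (\<lambda>x. f x + x)"

end

theory Submission
  imports Defs
begin

theorem lemma5p3:
  fixes T :: "'a::{finite,field} \<Rightarrow> 'a \<Rightarrow> 'a \<Rightarrow> 'a"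
    and M2 :: "'a \<Rightarrow> 'a \<Rightarrow> 'a"
    and p e :: nat
  assumes "prime p" and "e > 0" and "card (UNIV :: 'a set) = p ^ e"
    and "linear_field_add_PTR T"
  and "\<And>x y. M2 x y = T x y 0"
  shows "\<forall>a. a \<noteq> 0 \<and> a \<noteq> 1 \<longrightarrow> complete_mapping (\<lambda>x. M2 x a - x)"
proof (intro allI impI)
  fix a :: 'a
  assume a: "a \<noteq> 0 \<and> a \<noteq> 1"
  have P: "is_PTR T" and add: "\<And>x y. T 1 x y = x + y"
    and lin: "\<And>x y z. T x y z = T 1 (T x y 0) z"
    using assms(4) unfolding linear_field_add_PTR_def by blast+
  have lin2: "T x y z = T x y 0 + z" for x y z
    using lin[of x y z] add[of "T x y 0" z] by (rule trans)
  note PP = P[unfolded is_PTR_def]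
  have C1: "\<forall>m y. T m 0 y = y" using PP by (rule conjunct1)
  have C3: "\<forall>m. T m 1 0 = m" using PP[THEN conjunct2, THEN conjunct2] by (rule conjunct1)
  have C6: "\<forall>a b c d. a \<noteq> c \<longrightarrow> (\<exists>!m. T m a b = T m c d)"
    using PP[THEN conjunct2, THEN conjunct2, THEN conjunct2, THEN conjunct2, THEN conjunct2] by (rule conjunct1)
  have z: "T m 0 y = y" for m y using C1 by blast
  have one: "T m 1 0 = m" for m using C3 by blast
  have u: "a \<noteq> c \<Longrightarrow> \<exists>!m. T m a b = T m c d" for a b c d using C6 by blast
  have b1: "bij (\<lambda>x. M2 x a - x)"
    unfolding bij_iff
  proof
    fix k
    from u[of a 1 0 k] a obtain m where m: "T m a 0 = T m 1 k"
      and mu: "\<And>m'. T m' a 0 = T m' 1 k \<Longrightarrow> m' = m" by blast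
    have e: "(T m' a 0 = T m' 1 k) = (M2 m' a - m' = k)" for m'
    proof -
      have "T m' 1 k = m' + k" using lin2[of m' 1 k] one[of m'] by simp
      then show ?thesis using assms(5)[of m' a] by (auto simp: algebra_simps)
    qed
    show "\<exists>!x. M2 x a - x = k" using m mu e by blast
  qed
  have b2: "bij (\<lambda>x. (M2 x a - x) + x)"
    unfolding bij_iff
  proof
    fix k
    from u[of a 0 0 k] a obtain m where m: "T m a 0 = T m 0 k"
      and mu: "\<And>m'. T m' a 0 = T m' 0 k \<Longrightarrow> m' = m" by blast
    show "\<exists>!x. M2 x a - x + x = k" using m mu z assms(5) by (simp, blast)
  qed
  show "complete_mapping (\<lambda>x. M2 x a - x)"
    unfolding complete_mapping_def using b1 b2 by simp
qed

end
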